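(* For each $n\ge1$ there exist $N\ge1$, rational numbers $a_1,\dots,a_N\in\mathbb{Q}$ and integer valued positive definite quadratic forms $Q_1,\dots,Q_N$ on $\mathbb{Z}^n$ such that \[ \Theta_n(q)=\sum_{i=1}^N a_i\,\Theta_{Q_i}(q), \] where $\Theta_n(q)=\sum_{(k_1,\dots,k_n)\in\mathbb{Z}^n}q^{\sum_{1\le i\le j\le n}k_ik_j}e^{\frac{2\pi\sqrt{-1}}{n+2}(k_1+2k_2+\cdots+nk_n)}$ and, for a quadratic form $Q$, $\Theta_Q(q)=\sum_{(k_1,\dots,k_n)\in\mathbb{Z}^n}q^{Q(k_1,\dots,k_n)}$.
   Context: An integer valued positive definite quadratic form on $\mathbb{Z}^n$ is a quadratic form $Q$ with $Q(\mathbb{Z}^n)\subset\mathbb{Z}$ whose real extension is positive definite. *)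

theory Defs
  imports Complex_Main "HOL-Computational_Algebra.Formal_Power_Series"
begin

text \<open>Lattice points of Z^n, represented as integer sequences supported on indices 0..n-1
  (index i corresponds to the coordinate k_(i+1) of the paper).\<close>
definition lattice :: "nat \<Rightarrow> (nat \<Rightarrow> int) set" where
  "lattice n = {k. \<forall>i\<ge>n. k i = 0}"

definition qf :: "nat \<Rightarrow> (nat \<Rightarrow> nat \<Rightarrow> real) \<Rightarrow> (nat \<Rightarrow> real) \<Rightarrow> real" where
  "qf n A x = (\<Sum>i<n. \<Sum>j<n. A i j * x i * x j)"

definition int_posdef_qf :: "nat \<Rightarrow> (nat \<Rightarrow> nat \<Rightarrow> real) \<Rightarrow> bool" where
  "int_posdef_qf n A \<longleftrightarrow>
     (\<forall>k\<in>lattice n. qf n A (\<lambda>i. real_of_int (k i)) \<in> \<int>) \<and>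
     (\<forall>x::nat \<Rightarrow> real. (\<forall>i\<ge>n. x i = 0) \<and> (\<exists>i<n. x i \<noteq> 0) \<longrightarrow> qf n A x > 0)"

definition theta_Q :: "nat \<Rightarrow> (nat \<Rightarrow> nat \<Rightarrow> real) \<Rightarrow> complex fps" where
  "theta_Q n A = Abs_fps (\<lambda>m. of_nat (card {k\<in>lattice n. qf n A (\<lambda>i. real_of_int (k i)) = real m}))"

definition theta_exp :: "nat \<Rightarrow> (nat \<Rightarrow> int) \<Rightarrow> int" where
  "theta_exp n k = (\<Sum>j<n. \<Sum>i\<le>j. k i * k j)"

definition theta_n :: "nat \<Rightarrow> complex fps" where
  "theta_n n = Abs_fps (\<lambda>m. \<Sum>k\<in>{k\<in>lattice n. theta_exp n k = int m}.
      exp (2 * pi * \<i> / of_nat (n + 2) * of_int (\<Sum>i<n. int (i + 1) * k i)))"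

end

theory Submission imports Defs "HOL-Number_Theory.Cong" "HOL-Library.Real_Mod" begin

definition Lf :: "nat \<Rightarrow> (nat \<Rightarrow> int) \<Rightarrow> int" where
  "Lf n k = (\<Sum>i<n. int (i + 1) * k i)"
definition Sc :: "nat \<Rightarrow> nat \<Rightarrow> (nat \<Rightarrow> int) set" where
  "Sc n c = {k\<in>lattice n. theta_exp n k = int c}"

lemma theta_exp_Suc: "theta_exp (Suc n) k = theta_exp n k + k n * (\<Sum>i<n. k i) + k n ^ 2"
  unfolding theta_exp_def by (simp add: sum_distrib_left mult.commute power2_eq_square lessThan_Suc_atMost[symmetric])

lemma theta_exp_2: "2 * theta_exp n k = (\<Sum>i<n. k i ^ 2) + (\<Sum>i<n. k i) ^ 2"
proof (induction n)
  case 0 then show ?case by (simp add: theta_exp_def)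
next
  case (Suc n)
  show ?case unfolding theta_exp_Suc using Suc by (simp add: algebra_simps power2_eq_square)
qed

lemma theta_exp_ge: "i < n \<Longrightarrow> k i ^ 2 \<le> 2 * theta_exp n k"
proof -
  assume "i < n"
  have "k i ^ 2 \<le> (\<Sum>i<n. k i ^ 2)"
    using \<open>i < n\<close> by (intro member_le_sum) auto
  then show ?thesis unfolding theta_exp_2 by (smt (verit) zero_le_power2)
qed

lemma int_abs_le_sq: "\<bar>x::int\<bar> \<le> x^2"
proof (cases "x = 0")
  case False
  then have "1 \<le> \<bar>x\<bar>" by linarith
  then have "\<bar>x\<bar> * 1 \<le> \<bar>x\<bar> * \<bar>x\<bar>" by (intro mult_left_mono) auto
  then show ?thesis by (simp add: power2_eq_square abs_mult_self_eq)
qed simp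

lemma finite_Sc: "finite (Sc n c)"
proof -
  define B where "B = int (2 * c)"
  have sub: "Sc n c \<subseteq> (\<lambda>xs i. if i < n then xs ! i else 0) ` {xs. set xs \<subseteq> {-B..B} \<and> length xs = n}"
  proof
    fix k assume k: "k \<in> Sc n c"
    have lat: "\<forall>i\<ge>n. k i = 0" and te: "theta_exp n k = int c" using k by (auto simp: Sc_def lattice_def)
    have bnd: "\<bar>k i\<bar> \<le> B" if "i < n" for i
    proof -
      have "k i ^ 2 \<le> 2 * int c" using theta_exp_ge[OF that, of k] te by simp
      moreover have "\<bar>k i\<bar> \<le> k i ^ 2" by (rule int_abs_le_sq)
      ultimately show ?thesis unfolding B_def by simp
    qed
    show "k \<in> (\<lambda>xs i. if i < n then xs ! i else 0) ` {xs. set xs \<subseteq> {-B..B} \<and> length xs = n}"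
    proof (rule image_eqI[where x="map k [0..<n]"])
      show "k = (\<lambda>i. if i < n then map k [0..<n] ! i else 0)"
        using lat by (auto simp: fun_eq_iff)
      show "map k [0..<n] \<in> {xs. set xs \<subseteq> {- B..B} \<and> length xs = n}"
        using bnd by (force simp: abs_le_iff)
    qed
  qed
  show ?thesis by (rule finite_subset[OF sub]) (intro finite_imageI finite_lists_length_eq, simp)
qed


definition Cm :: "nat \<Rightarrow> nat \<Rightarrow> real" where
  "Cm i j = (if i \<le> j then 1 else 0)"

lemma qf_Cm_Suc: "qf (Suc n) Cm x = qf n Cm x + x n * (\<Sum>i<n. x i) + x n ^ 2"
  unfolding qf_def Cm_def by (simp add: sum.distrib sum_distrib_left algebra_simps power2_eq_square)

lemma qf_Cm_2: "2 * qf n Cm x = (\<Sum>i<n. x i ^ 2) + (\<Sum>i<n. x i) ^ 2"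
proof (induction n)
  case 0 then show ?case by (simp add: qf_def)
next
  case (Suc n)
  show ?case unfolding qf_Cm_Suc using Suc by (simp add: algebra_simps power2_eq_square)
qed

lemma qf_Cm_int: "qf n Cm (\<lambda>i. real_of_int (k i)) = real_of_int (theta_exp n k)"
proof -
  have "2 * qf n Cm (\<lambda>i. real_of_int (k i)) = real_of_int (2 * theta_exp n k)"
    unfolding qf_Cm_2 theta_exp_2 by simp
  then show ?thesis by simp
qed

lemma qf_Cm_pos:
  assumes "p < n" "x p \<noteq> 0"
  shows "qf n Cm x > 0"
proof -
  have "0 < (\<Sum>i<n. x i ^ 2)"
    using assms by (intro sum_pos2[of _ p]) auto
  then have "0 < 2 * qf n Cm x" unfolding qf_Cm_2 by (smt (verit) zero_le_power2)
  then show ?thesis by simp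
qed

lemma qf_cong: "(\<And>p. p < n \<Longrightarrow> x p = y p) \<Longrightarrow> qf n A x = qf n A y"
  unfolding qf_def by (intro sum.cong refl) auto

definition comp :: "nat \<Rightarrow> (nat \<Rightarrow> nat \<Rightarrow> real) \<Rightarrow> (nat \<Rightarrow> nat \<Rightarrow> real) \<Rightarrow> nat \<Rightarrow> nat \<Rightarrow> real" where
  "comp n A \<beta> i j = (\<Sum>p<n. \<Sum>q<n. A p q * \<beta> p i * \<beta> q j)"

lemma qf_comp: "qf n (comp n A \<beta>) x = qf n A (\<lambda>p. \<Sum>i<n. \<beta> p i * x i)"
proof -
  have "qf n (comp n A \<beta>) x = (\<Sum>i<n. \<Sum>j<n. \<Sum>p<n. \<Sum>q<n. A p q * (\<beta> p i * x i) * (\<beta> q j * x j))"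
    unfolding qf_def comp_def by (simp add: sum_distrib_left sum_distrib_right mult_ac)
  also have "\<dots> = (\<Sum>i<n. \<Sum>p<n. \<Sum>q<n. \<Sum>j<n. A p q * (\<beta> p i * x i) * (\<beta> q j * x j))"
    by (rule sum.cong[OF refl], subst sum.swap, rule sum.cong[OF refl], subst sum.swap, rule refl)
  also have "\<dots> = (\<Sum>p<n. \<Sum>i<n. \<Sum>q<n. \<Sum>j<n. A p q * (\<beta> p i * x i) * (\<beta> q j * x j))"
    by (rule sum.swap)
  also have "\<dots> = (\<Sum>p<n. \<Sum>q<n. \<Sum>i<n. \<Sum>j<n. A p q * (\<beta> p i * x i) * (\<beta> q j * x j))"
    by (rule sum.cong[OF refl], rule sum.swap)
  also have "\<dots> = qf n A (\<lambda>p. \<Sum>i<n. \<beta> p i * x i)"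
    unfolding qf_def by (simp add: sum_distrib_left sum_distrib_right mult_ac)
  finally show ?thesis .
qed


lemma if_one_mult[simp]: "(if P then 1 else 0) * (x::'a::semiring_1) = (if P then x else 0)"
  by simp

lemma of_int_if01[simp]: "real_of_int (if P then 1 else 0) = (if P then 1 else 0)"
  by simp

definition bint :: "nat \<Rightarrow> nat \<Rightarrow> nat \<Rightarrow> int" where
  "bint d p i = (if p = 0 then (if i = 0 then int d else - int (i + 1)) else (if p = i then 1 else 0))"

definition Bmap :: "nat \<Rightarrow> nat \<Rightarrow> (nat \<Rightarrow> int) \<Rightarrow> nat \<Rightarrow> int" where
  "Bmap n d t = (\<lambda>p. if p < n then (\<Sum>i<n. bint d p i * t i) else 0)"

definition Ad :: "nat \<Rightarrow> nat \<Rightarrow> nat \<Rightarrow> nat \<Rightarrow> real" where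
  "Ad n d = comp n Cm (\<lambda>p i. real_of_int (bint d p i))"

lemma Bmap_0: "Bmap (Suc n) d t 0 = int d * t 0 - (\<Sum>i<n. int (i + 2) * t (Suc i))"
  unfolding Bmap_def bint_def by (simp add: sum.lessThan_Suc_shift del: sum.lessThan_Suc) (simp add: sum_negf[symmetric] algebra_simps, rule sum.cong, auto)

lemma Bmap_Suc: "q < n \<Longrightarrow> Bmap (Suc n) d t (Suc q) = t (Suc q)"
  unfolding Bmap_def bint_def by (simp add: sum.lessThan_Suc_shift del: sum.lessThan_Suc)

lemma Lf_Suc: "Lf (Suc n) k = k 0 + (\<Sum>i<n. int (i + 2) * k (Suc i))"
  unfolding Lf_def by (simp add: sum.lessThan_Suc_shift del: sum.lessThan_Suc)

lemma Lf_Bmap: "Lf (Suc n) (Bmap (Suc n) d t) = int d * t 0"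
proof -
  have "(\<Sum>i<n. int (i + 2) * Bmap (Suc n) d t (Suc i)) = (\<Sum>i<n. int (i + 2) * t (Suc i))"
    by (intro sum.cong refl) (simp add: Bmap_Suc)
  then show ?thesis unfolding Lf_Suc Bmap_0 by simp
qed

lemma Bmap_lattice: "Bmap n d t \<in> lattice n"
  unfolding lattice_def Bmap_def by auto

lemma qf_Ad: "qf n (Ad n d) (\<lambda>i. real_of_int (t i)) = real_of_int (theta_exp n (Bmap n d t))"
proof -
  have "qf n (Ad n d) (\<lambda>i. real_of_int (t i)) = qf n Cm (\<lambda>p. real_of_int (Bmap n d t p))"
    unfolding Ad_def qf_comp by (intro qf_cong) (simp add: Bmap_def)
  then show ?thesis by (simp add: qf_Cm_int)
qed

lemma Ad_posdef:
  assumes "d \<ge> 1"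
  shows "int_posdef_qf (Suc n) (Ad (Suc n) d)"
  unfolding int_posdef_qf_def
proof (intro conjI ballI allI impI)
  fix k :: "nat \<Rightarrow> int"
  show "qf (Suc n) (Ad (Suc n) d) (\<lambda>i. real_of_int (k i)) \<in> \<int>"
    unfolding qf_Ad by simp
next
  fix x :: "nat \<Rightarrow> real"
  assume x: "(\<forall>i\<ge>Suc n. x i = 0) \<and> (\<exists>i<Suc n. x i \<noteq> 0)"
  define z where "z = (\<lambda>p. \<Sum>i<Suc n. real_of_int (bint d p i) * x i)"
  have "\<exists>p<Suc n. z p \<noteq> 0"
  proof (cases "\<exists>q<n. x (Suc q) \<noteq> 0")
    case True
    then obtain q where q: "q < n" "x (Suc q) \<noteq> 0" by blast
    have "z (Suc q) = x (Suc q)" unfolding z_def bint_def using q(1)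
      by (simp add: sum.lessThan_Suc_shift del: sum.lessThan_Suc)
    then show ?thesis using q by (intro exI[of _ "Suc q"]) auto
  next
    case False
    then have x0: "x 0 \<noteq> 0" using x
      by (metis less_Suc_eq_0_disj)
    have "z 0 = real d * x 0" unfolding z_def bint_def using False
      by (simp add: sum.lessThan_Suc_shift del: sum.lessThan_Suc)
    then show ?thesis using x0 assms by (intro exI[of _ 0]) auto
  qed
  then obtain p where "p < Suc n" "z p \<noteq> 0" by blast
  then have "qf (Suc n) Cm z > 0" by (rule qf_Cm_pos)
  then show "qf (Suc n) (Ad (Suc n) d) x > 0"
    unfolding Ad_def qf_comp z_def .
qed

definition Einv :: "nat \<Rightarrow> nat \<Rightarrow> (nat \<Rightarrow> int) \<Rightarrow> nat \<Rightarrow> int" where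
  "Einv n d k = (\<lambda>i. if i = 0 then Lf n k div int d else k i)"

lemma theta_Q_Ad:
  assumes "d \<ge> 1"
  shows "fps_nth (theta_Q (Suc n) (Ad (Suc n) d)) c = of_nat (card {k\<in>Sc (Suc n) c. int d dvd Lf (Suc n) k})"
proof -
  let ?N = "Suc n"
  have "{t\<in>lattice ?N. qf ?N (Ad ?N d) (\<lambda>i. real_of_int (t i)) = real c}
        = {t\<in>lattice ?N. theta_exp ?N (Bmap ?N d t) = int c}"
    unfolding qf_Ad by (metis (lifting) of_int_eq_iff of_int_of_nat_eq)
  moreover have "bij_betw (Bmap ?N d) {t\<in>lattice ?N. theta_exp ?N (Bmap ?N d t) = int c}
                    {k\<in>Sc ?N c. int d dvd Lf ?N k}"
  proof (rule bij_betw_byWitness[where f'="Einv ?N d"])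
    show "\<forall>t\<in>{t\<in>lattice ?N. theta_exp ?N (Bmap ?N d t) = int c}. Einv ?N d (Bmap ?N d t) = t"
    proof
      fix t assume t: "t \<in> {t\<in>lattice ?N. theta_exp ?N (Bmap ?N d t) = int c}"
      show "Einv ?N d (Bmap ?N d t) = t"
      proof
        fix i show "Einv ?N d (Bmap ?N d t) i = t i"
        proof (cases i)
          case 0 then show ?thesis using assms by (simp add: Einv_def Lf_Bmap)
        next
          case (Suc q) then show ?thesis using t
            by (cases "q < n") (simp_all add: Einv_def Bmap_Suc, simp add: Bmap_def lattice_def)
        qed
      qed
    qed
    show "\<forall>k\<in>{k\<in>Sc ?N c. int d dvd Lf ?N k}. Bmap ?N d (Einv ?N d k) = k"
    proof
      fix k assume k: "k \<in> {k\<in>Sc ?N c. int d dvd Lf ?N k}"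
      have lat: "\<forall>i\<ge>?N. k i = 0" and dv: "int d dvd Lf ?N k" using k by (auto simp: Sc_def lattice_def)
      show "Bmap ?N d (Einv ?N d k) = k"
      proof
        fix p show "Bmap ?N d (Einv ?N d k) p = k p"
        proof (cases p)
          case 0
          have sm: "(\<Sum>i<n. int (i + 2) * Einv ?N d k (Suc i)) = (\<Sum>i<n. int (i + 2) * k (Suc i))"
            by (simp add: Einv_def)
          have "int d * (Lf ?N k div int d) = Lf ?N k" using dv by simp
          then show ?thesis unfolding 0 Bmap_0 sm by (simp add: Einv_def Lf_Suc)
        next
          case (Suc q)
          then show ?thesis using lat
            by (cases "q < n") (simp_all add: Einv_def Bmap_Suc, simp add: Bmap_def)
        qed
      qed
    qed
    show "Bmap ?N d ` {t\<in>lattice ?N. theta_exp ?N (Bmap ?N d t) = int c} \<subseteq> {k\<in>Sc ?N c. int d dvd Lf ?N k}"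
      by (auto simp: Sc_def Bmap_lattice Lf_Bmap)
    show "Einv ?N d ` {k\<in>Sc ?N c. int d dvd Lf ?N k} \<subseteq> {t\<in>lattice ?N. theta_exp ?N (Bmap ?N d t) = int c}"
    proof
      fix t assume "t \<in> Einv ?N d ` {k\<in>Sc ?N c. int d dvd Lf ?N k}"
      then obtain k where k: "k \<in> {k\<in>Sc ?N c. int d dvd Lf ?N k}" and t: "t = Einv ?N d k" by blast
      have eq: "Bmap ?N d t = k" using \<open>\<forall>k\<in>{k\<in>Sc ?N c. int d dvd Lf ?N k}. Bmap ?N d (Einv ?N d k) = k\<close> k t by blast
      have "t \<in> lattice ?N" using k unfolding t by (auto simp: Einv_def Sc_def lattice_def)
      then show "t \<in> {t\<in>lattice ?N. theta_exp ?N (Bmap ?N d t) = int c}" using eq k by (auto simp: Sc_def)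
    qed
  qed
  ultimately show ?thesis unfolding theta_Q_def by (simp add: bij_betw_same_card)
qed


definition rep :: "nat \<Rightarrow> complex fps \<Rightarrow> bool" where
  "rep n f \<longleftrightarrow> (\<exists>(N::nat) (a::nat \<Rightarrow> rat) (A::nat \<Rightarrow> nat \<Rightarrow> nat \<Rightarrow> real).
           N \<ge> 1 \<and> (\<forall>i<N. int_posdef_qf n (A i)) \<and>
           f = (\<Sum>i<N. fps_const (of_rat (a i)) * theta_Q n (A i)))"

lemma sum_lessThan_add: "(\<Sum>i<N1 + N2. F i) = (\<Sum>i<N1. F i) + (\<Sum>i<N2. F (N1 + i))"
  for F :: "nat \<Rightarrow> 'a::comm_monoid_add"
  by (induction N2) (simp_all add: add.assoc)

lemma rep_add:
  assumes "rep n f" "rep n g" shows "rep n (f + g)"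
proof -
  obtain N1 :: nat and a1 A1 where 1: "N1 \<ge> 1" "\<forall>i<N1. int_posdef_qf n (A1 i)"
    "f = (\<Sum>i<N1. fps_const (of_rat (a1 i)) * theta_Q n (A1 i))" using assms(1) unfolding rep_def by (elim exE conjE) (rule that, assumption+)
  obtain N2 :: nat and a2 A2 where 2: "N2 \<ge> 1" "\<forall>i<N2. int_posdef_qf n (A2 i)"
    "g = (\<Sum>i<N2. fps_const (of_rat (a2 i)) * theta_Q n (A2 i))" using assms(2) unfolding rep_def by (elim exE conjE) (rule that, assumption+)
  define a where "a = (\<lambda>i. if i < N1 then a1 i else a2 (i - N1))"
  define A where "A = (\<lambda>i. if i < N1 then A1 i else A2 (i - N1))"
  have e: "f + g = (\<Sum>i<N1 + N2. fps_const (of_rat (a i)) * theta_Q n (A i))"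
  proof -
    have "(\<Sum>i<N1. fps_const (of_rat (a i)) * theta_Q n (A i)) = f"
      unfolding 1(3) a_def A_def by (intro sum.cong) auto
    moreover have "(\<Sum>i<N2. fps_const (of_rat (a (N1 + i))) * theta_Q n (A (N1 + i))) = g"
      unfolding 2(3) a_def A_def by (intro sum.cong) auto
    ultimately show ?thesis unfolding sum_lessThan_add by simp
  qed
  have p: "\<forall>i<N1 + N2. int_posdef_qf n (A i)" using 1 2 unfolding A_def by auto
  have "N1 + N2 \<ge> 1" using 1(1) by simp
  then show ?thesis unfolding rep_def
    by (intro exI[of _ "N1 + N2"] exI[of _ a] exI[of _ A] conjI p e)
qed

lemma rep_smult:
  assumes "rep n f" shows "rep n (fps_const (of_rat r) * f)"
proof -
  obtain N :: nat and a A where 1: "N \<ge> 1" "\<forall>i<N. int_posdef_qf n (A i)"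
    "f = (\<Sum>i<N. fps_const (of_rat (a i)) * theta_Q n (A i))" using assms(1) unfolding rep_def by (elim exE conjE) (rule that, assumption+)
  have e: "fps_const (of_rat r) * f = (\<Sum>i<N. fps_const (of_rat (r * a i)) * theta_Q n (A i))"
    unfolding 1(3) sum_distrib_left
    by (intro sum.cong refl) (simp add: of_rat_mult fps_const_mult[symmetric] mult.assoc[symmetric] del: fps_const_mult)
  show ?thesis unfolding rep_def
    by (intro exI[of _ N] exI[of _ "\<lambda>i. r * a i"] exI[of _ A] conjI 1(1) 1(2) e)
qed

lemma rep_zero: "rep (Suc n) 0"
  unfolding rep_def
  by (rule exI[of _ 1], rule exI[of _ "\<lambda>_. 0"], rule exI[of _ "\<lambda>_. Ad (Suc n) 1"]) (simp add: Ad_posdef)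

lemma rep_theta: "d \<ge> 1 \<Longrightarrow> rep (Suc n) (theta_Q (Suc n) (Ad (Suc n) d))"
  unfolding rep_def
  by (rule exI[of _ 1], rule exI[of _ "\<lambda>_. 1"], rule exI[of _ "\<lambda>_. Ad (Suc n) d"]) (simp add: Ad_posdef)

lemma rep_diff: "rep n f \<Longrightarrow> rep n g \<Longrightarrow> rep n (f - g)"
proof -
  have "fps_const (of_rat (-1)) * g = - g"
    by (simp add: fps_const_neg[symmetric] del: fps_const_neg)
  then show "rep n f \<Longrightarrow> rep n g \<Longrightarrow> rep n (f - g)"
    using rep_add[of n f "fps_const (of_rat (-1)) * g"] rep_smult[of n g "-1"] by simp
qed

lemma rep_sum: "finite S \<Longrightarrow> (\<And>x. x \<in> S \<Longrightarrow> rep (Suc n) (f x)) \<Longrightarrow> rep (Suc n) (sum f S)"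
  by (induction S rule: finite_induct) (auto simp: rep_zero rep_add)


definition ex :: "nat \<Rightarrow> int \<Rightarrow> complex" where
  "ex N X = exp (2 * pi * \<i> / of_nat (N + 2) * of_int X)"

lemma ex_cis: "ex N X = cis (2 * pi * real_of_int X / real (N + 2))"
  unfolding ex_def cis_conv_exp by (simp add: field_simps)

lemma ex_cong:
  assumes "[X = Y] (mod int (N + 2))"
  shows "ex N X = ex N Y"
proof -
  obtain q where q: "X = Y + int (N + 2) * q"
    using assms by (metis cong_iff_lin cong_sym)
  have "2 * pi * real_of_int X / real (N + 2) = 2 * pi * real_of_int Y / real (N + 2) + 2 * pi * real_of_int q"
    unfolding q by (simp add: field_simps)
  then show ?thesis unfolding ex_cis
    by (simp add: cis_mult[symmetric])
qed

lemma ortho: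
  assumes "e dvd (N + 2)" "e \<ge> 1"
  shows "(\<Sum>t<(N + 2) div e. ex N (int (e * t) * X)) = (if int ((N + 2) div e) dvd X then of_nat ((N + 2) div e) else 0)"
proof -
  define d where "d = (N + 2) div e"
  have ed: "real e * real d = real (N + 2)" using assms unfolding d_def
    by (metis dvd_mult_div_cancel of_nat_mult)
  have d0: "d \<ge> 1"
  proof -
    have "e \<le> N + 2" using assms(1) by (rule dvd_imp_le) simp
    then have "0 < (N + 2) div e" using assms(2) by (simp add: div_greater_zero_iff)
    then show ?thesis unfolding d_def by simp
  qed
  define w where "w = cis (2 * pi * real_of_int X / real d)"
  have tm: "ex N (int (e * t) * X) = w ^ t" for t
  proof -
    have "2 * pi * real_of_int (int (e * t) * X) / real (N + 2) = 2 * pi * (real e * real t * real_of_int X) / (real e * real d)"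
      using ed by simp
    also have "\<dots> = real t * (2 * pi * real_of_int X / real d)" using assms d0 by (simp add: field_simps)
    finally have "2 * pi * real_of_int (int (e * t) * X) / real (N + 2) = real t * (2 * pi * real_of_int X / real d)" .
    then show ?thesis unfolding ex_cis w_def DeMoivre by simp
  qed
  have wd: "w ^ d = 1"
  proof -
    have "real d * (2 * pi * real_of_int X / real d) = 2 * pi * real_of_int X" using d0 by simp
    then show ?thesis unfolding w_def DeMoivre by (simp add: cis_multiple_2pi)
  qed
  have w1: "w = 1 \<longleftrightarrow> int d dvd X"
  proof
    assume "w = 1"
    then obtain z where z: "2 * pi * real_of_int X / real d = real_of_int z * (2 * pi)"
      unfolding w_def cis_eq_1_iff by blast
    then have "real_of_int X = real_of_int (z * int d)" using d0 by (simp add: field_simps)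
    then show "int d dvd X" by (metis of_int_eq_iff dvd_triv_right)
  next
    assume "int d dvd X"
    then obtain z where "X = int d * z" by blast
    then have "2 * pi * real_of_int X / real d = 2 * pi * real_of_int z" using d0 by (simp add: field_simps)
    then show "w = 1" unfolding w_def by simp
  qed
  have "(\<Sum>t<d. ex N (int (e * t) * X)) = (\<Sum>t<d. w ^ t)" using tm by simp
  also have "\<dots> = (if int d dvd X then of_nat d else 0)"
    unfolding sum_gp_strict using w1 wd by auto
  finally show ?thesis unfolding d_def .
qed


definition Psi :: "nat \<Rightarrow> nat \<Rightarrow> complex fps" where
  "Psi N j = Abs_fps (\<lambda>c. \<Sum>k\<in>Sc N c. ex N (int j * Lf N k))"

lemma Psi_ortho:
  assumes "e dvd (Suc n + 2)" "e \<ge> 1"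
  shows "(\<Sum>t<(Suc n + 2) div e. Psi (Suc n) (e * t))
         = fps_const (of_nat ((Suc n + 2) div e)) * theta_Q (Suc n) (Ad (Suc n) ((Suc n + 2) div e))"
proof (rule fps_ext)
  fix c
  define d where "d = (Suc n + 2) div e"
  have d0: "d \<ge> 1"
  proof -
    have "e \<le> Suc n + 2" using assms(1) by (rule dvd_imp_le) simp
    then have "0 < (Suc n + 2) div e" using assms(2) by (simp add: div_greater_zero_iff)
    then show ?thesis unfolding d_def by simp
  qed
  have "fps_nth (\<Sum>t<d. Psi (Suc n) (e * t)) c = (\<Sum>t<d. \<Sum>k\<in>Sc (Suc n) c. ex (Suc n) (int (e * t) * Lf (Suc n) k))"
    by (simp add: fps_sum_nth Psi_def)
  also have "\<dots> = (\<Sum>k\<in>Sc (Suc n) c. \<Sum>t<d. ex (Suc n) (int (e * t) * Lf (Suc n) k))"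
    by (rule sum.swap)
  also have "\<dots> = (\<Sum>k\<in>Sc (Suc n) c. if int d dvd Lf (Suc n) k then of_nat d else 0)"
    using ortho[OF assms] unfolding d_def by simp
  also have "\<dots> = (\<Sum>k\<in>{k\<in>Sc (Suc n) c. int d dvd Lf (Suc n) k}. of_nat d)"
    by (rule sum.inter_filter[symmetric, OF finite_Sc])
  also have "\<dots> = of_nat d * of_nat (card {k\<in>Sc (Suc n) c. int d dvd Lf (Suc n) k})"
    by (simp add: mult.commute)
  also have "\<dots> = fps_nth (fps_const (of_nat d) * theta_Q (Suc n) (Ad (Suc n) d)) c"
    using theta_Q_Ad[OF d0] by simp
  finally show "fps_nth (\<Sum>t<(Suc n + 2) div e. Psi (Suc n) (e * t)) c
      = fps_nth (fps_const (of_nat ((Suc n + 2) div e)) * theta_Q (Suc n) (Ad (Suc n) ((Suc n + 2) div e))) c"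
    unfolding d_def .
qed

lemma J_image:
  fixes e M :: nat
  assumes "e dvd M" "e \<ge> 1"
  shows "{j. j < M \<and> e dvd j} = (\<lambda>t. e * t) ` {..<M div e}"
proof -
  obtain d where M: "M = e * d" using assms(1) by blast
  have "e \<noteq> 0" using assms(2) by simp
  then have de: "M div e = d" unfolding M by simp
  show ?thesis unfolding de
  proof (rule set_eqI, rule iffI)
    fix j assume "j \<in> {j. j < M \<and> e dvd j}"
    then have "j < M" "e dvd j" by auto
    then obtain t where "j = e * t" by blast
    then show "j \<in> (*) e ` {..<d}" using \<open>j < M\<close> unfolding M by auto
  next
    fix j assume "j \<in> (*) e ` {..<d}"
    then obtain t where "t < d" "j = e * t" by auto
    then show "j \<in> {j. j < M \<and> e dvd j}" unfolding M using \<open>e \<noteq> 0\<close> by simp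
  qed
qed

lemma rep_J:
  assumes "e dvd (Suc n + 2)" "e \<ge> 1"
  shows "rep (Suc n) (sum (Psi (Suc n)) {j. j < Suc n + 2 \<and> e dvd j})"
proof -
  have d1: "(Suc n + 2) div e \<ge> 1"
  proof -
    have "e \<le> Suc n + 2" using assms(1) by (rule dvd_imp_le) simp
    then have "0 < (Suc n + 2) div e" using assms(2) by (simp add: div_greater_zero_iff)
    then show ?thesis by simp
  qed
  have "sum (Psi (Suc n)) {j. j < Suc n + 2 \<and> e dvd j} = (\<Sum>t<(Suc n + 2) div e. Psi (Suc n) (e * t))"
    unfolding J_image[OF assms] using assms(2) by (subst sum.reindex) (auto simp: inj_on_def)
  also have "\<dots> = fps_const (of_rat (of_nat ((Suc n + 2) div e))) * theta_Q (Suc n) (Ad (Suc n) ((Suc n + 2) div e))"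
    unfolding Psi_ortho[OF assms] by simp
  finally have eq: "sum (Psi (Suc n)) {j. j < Suc n + 2 \<and> e dvd j} = fps_const (of_rat (of_nat ((Suc n + 2) div e))) * theta_Q (Suc n) (Ad (Suc n) ((Suc n + 2) div e))" .
  show ?thesis unfolding eq by (rule rep_smult[OF rep_theta[OF d1]])
qed


definition Yv :: "nat \<Rightarrow> (nat \<Rightarrow> int) \<Rightarrow> nat \<Rightarrow> int" where
  "Yv N k r = (if r = 0 then - (\<Sum>i<N. k i) else k (r - 1))"

definition Kv :: "nat \<Rightarrow> (nat \<Rightarrow> int) \<Rightarrow> nat \<Rightarrow> int" where
  "Kv N z = (\<lambda>i. if i < N then z (Suc i) else 0)"

lemma Kv_lattice: "Kv N z \<in> lattice N"
  unfolding Kv_def lattice_def by auto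

lemma Kv_Yv: "k \<in> lattice N \<Longrightarrow> Kv N (Yv N k) = k"
  unfolding Kv_def Yv_def lattice_def by (auto simp: fun_eq_iff)

lemma Kv_cong: "(\<And>r. r \<le> N \<Longrightarrow> z r = z' r) \<Longrightarrow> Kv N z = Kv N z'"
  unfolding Kv_def by (auto simp: fun_eq_iff)

lemma sum_Yv: "(\<Sum>r\<le>N. Yv N k r) = 0"
  unfolding Yv_def by (simp add: sum.atMost_shift)

lemma Yv_Kv: "(\<Sum>r\<le>N. z r) = 0 \<Longrightarrow> r \<le> N \<Longrightarrow> Yv N (Kv N z) r = z r"
  unfolding Yv_def Kv_def by (auto simp: sum.atMost_shift)

lemma Lf_Kv: "Lf N (Kv N z) = (\<Sum>r\<le>N. int r * z r)"
  unfolding Lf_def Kv_def by (simp add: sum.atMost_shift)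

lemma theta_Kv:
  assumes "(\<Sum>r\<le>N. z r) = 0" shows "2 * theta_exp N (Kv N z) = (\<Sum>r\<le>N. z r ^ 2)"
proof -
  have e: "(\<Sum>i<N. z (Suc i)) = - z 0" using assms by (simp add: sum.atMost_shift)
  show ?thesis unfolding theta_exp_2 Kv_def by (simp add: sum.atMost_shift e)
qed

lemma theta_Yv: "k \<in> lattice N \<Longrightarrow> 2 * theta_exp N k = (\<Sum>r\<le>N. Yv N k r ^ 2)"
  using theta_Kv[OF sum_Yv, of N k] Kv_Yv[of k N] by simp

definition rho :: "nat \<Rightarrow> (nat \<Rightarrow> nat) \<Rightarrow> (nat \<Rightarrow> int) \<Rightarrow> nat \<Rightarrow> int" where
  "rho N h k = Kv N (\<lambda>r. Yv N k (h r))"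

lemma rho_props:
  assumes h: "bij_betw h {..N} {..N}" and k: "k \<in> lattice N"
  shows "rho N h k \<in> lattice N" "theta_exp N (rho N h k) = theta_exp N k"
    "Lf N (rho N h k) = (\<Sum>r\<le>N. int r * Yv N k (h r))"
proof -
  have s0: "(\<Sum>r\<le>N. Yv N k (h r)) = 0"
    using sum.reindex_bij_betw[OF h, of "Yv N k"] sum_Yv[of N k] by simp
  show "rho N h k \<in> lattice N" unfolding rho_def by (rule Kv_lattice)
  have "2 * theta_exp N (rho N h k) = (\<Sum>r\<le>N. Yv N k (h r) ^ 2)"
    unfolding rho_def by (rule theta_Kv[OF s0])
  also have "\<dots> = (\<Sum>r\<le>N. Yv N k r ^ 2)"
    using sum.reindex_bij_betw[OF h, of "\<lambda>r. Yv N k r ^ 2"] by simp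
  also have "\<dots> = 2 * theta_exp N k" using theta_Yv[OF k] by simp
  finally show "theta_exp N (rho N h k) = theta_exp N k" by simp
  show "Lf N (rho N h k) = (\<Sum>r\<le>N. int r * Yv N k (h r))"
    unfolding rho_def Lf_Kv ..
qed

lemma rho_inv:
  assumes h: "bij_betw h {..N} {..N}" and g: "bij_betw g {..N} {..N}"
    and gh: "\<And>r. r \<le> N \<Longrightarrow> h (g r) = r" and k: "k \<in> lattice N"
  shows "rho N g (rho N h k) = k"
proof -
  have s0: "(\<Sum>r\<le>N. Yv N k (h r)) = 0"
    using sum.reindex_bij_betw[OF h, of "Yv N k"] sum_Yv[of N k] by simp
  have "rho N g (rho N h k) = Kv N (\<lambda>r. Yv N k r)"
    unfolding rho_def
  proof (rule Kv_cong)
    fix r assume r: "r \<le> N"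
    have "g r \<le> N" using g r by (auto simp: bij_betw_def)
    then show "Yv N (Kv N (\<lambda>r. Yv N k (h r))) (g r) = Yv N k r"
      using Yv_Kv[OF s0] gh[OF r] by simp
  qed
  then show ?thesis using Kv_Yv[OF k] by simp
qed

lemma rho_bij:
  assumes h: "bij_betw h {..N} {..N}" and g: "bij_betw g {..N} {..N}"
    and gh: "\<And>r. r \<le> N \<Longrightarrow> h (g r) = r" and hg: "\<And>r. r \<le> N \<Longrightarrow> g (h r) = r"
  shows "bij_betw (rho N h) (Sc N c) (Sc N c)"
proof (rule bij_betw_byWitness[where f'="rho N g"])
  show "\<forall>k\<in>Sc N c. rho N g (rho N h k) = k" using rho_inv[OF h g gh] by (auto simp: Sc_def)
  show "\<forall>k\<in>Sc N c. rho N h (rho N g k) = k" using rho_inv[OF g h hg] by (auto simp: Sc_def)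
  show "rho N h ` Sc N c \<subseteq> Sc N c" using rho_props[OF h] by (auto simp: Sc_def)
  show "rho N g ` Sc N c \<subseteq> Sc N c" using rho_props[OF g] by (auto simp: Sc_def)
qed


lemma galois:
  assumes cop: "coprime a (N + 2)"
  shows "Psi N a = Psi N 1"
proof -
  define M where "M = N + 2"
  have M2: "M \<ge> 2" unfolding M_def by simp
  have copi: "coprime (int M) (int a)" using cop unfolding M_def by (subst coprime_int_iff) (simp add: coprime_commute)
  define g where "g r = nat ((int a * int (r + 1) - 1) mod int M)" for r
  have gi: "int (g r) = (int a * int (r + 1) - 1) mod int M" for r
    unfolding g_def using M2 by simp
  have gcong: "[int (g r) = int a * int (r + 1) - 1] (mod int M)" for r
    unfolding gi cong_def by simp
  have g_le: "g r \<le> N" if r: "r \<le> N" for r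
  proof (rule ccontr)
    assume "\<not> g r \<le> N"
    moreover have "int (g r) < int M" unfolding gi using M2 by simp
    ultimately have gM: "int (g r) = int M - 1" unfolding M_def by simp
    define X where "X = int a * int (r + 1)"
    have m1: "(X - 1) mod int M = int M - 1" using gM gi unfolding X_def by simp
    have "X - 1 = int M * ((X - 1) div int M) + (X - 1) mod int M" by simp
    then have "X = int M * ((X - 1) div int M) + int M" using m1 by linarith
    then have "X = int M * ((X - 1) div int M + 1)" by (simp add: algebra_simps)
    then have "int M dvd int a * int (r + 1)" unfolding X_def by (metis dvd_triv_left)
    then have "int M dvd int (r + 1)" using copi by (simp add: coprime_dvd_mult_right_iff)
    then have "M dvd r + 1" by (simp only: of_nat_dvd_iff)
    then have "M \<le> r + 1" by (rule dvd_imp_le) simp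
    then show False using r unfolding M_def by simp
  qed
  have g_inj: "inj_on g {..N}"
  proof (rule inj_onI)
    fix r r' assume r: "r \<in> {..N}" and r': "r' \<in> {..N}" and eq: "g r = g r'"
    have "(int a * int (r + 1) - 1) mod int M = (int a * int (r' + 1) - 1) mod int M"
      using eq gi by metis
    then have "int M dvd (int a * int (r + 1) - 1) - (int a * int (r' + 1) - 1)"
      by (simp add: mod_eq_dvd_iff)
    then have "int M dvd int a * (int r - int r')" by (simp add: algebra_simps)
    then have d: "int M dvd (int r - int r')" using copi by (simp add: coprime_dvd_mult_right_iff)
    show "r = r'"
    proof (rule ccontr)
      assume "r \<noteq> r'"
      then have "int r - int r' \<noteq> 0" by simp
      from dvd_imp_le_int[OF this d] have "int M \<le> \<bar>int r - int r'\<bar>" by simp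
      then show False using r r' unfolding M_def by auto
    qed
  qed
  have gimg: "g ` {..N} = {..N}"
    by (rule endo_inj_surj) (use g_le g_inj in auto)
  have gb: "bij_betw g {..N} {..N}" unfolding bij_betw_def using g_inj gimg by simp
  define h where "h = inv_into {..N} g"
  have hb: "bij_betw h {..N} {..N}" unfolding h_def using bij_betw_inv_into[OF gb] .
  have hg: "h (g r) = r" if "r \<le> N" for r
    unfolding h_def using g_inj that by (simp add: inv_into_f_f)
  have gh: "g (h r) = r" if "r \<le> N" for r
    unfolding h_def using gimg that by (metis atMost_iff f_inv_into_f)
  have expo: "[Lf N (rho N h k) = int a * Lf N k] (mod int M)" if k: "k \<in> lattice N" for k
  proof -
    have "Lf N (rho N h k) = (\<Sum>r\<le>N. int r * Yv N k (h r))" using rho_props(3)[OF hb k] .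
    also have "\<dots> = (\<Sum>s\<le>N. int (g s) * Yv N k s)"
      using sum.reindex_bij_betw[OF gb, of "\<lambda>r. int r * Yv N k (h r)"] hg by simp
    finally have e1: "Lf N (rho N h k) = (\<Sum>s\<le>N. int (g s) * Yv N k s)" .
    have c1: "[(\<Sum>s\<le>N. int (g s) * Yv N k s) = (\<Sum>s\<le>N. (int a * int (s + 1) - 1) * Yv N k s)] (mod int M)"
      by (intro cong_sum cong_mult gcong cong_refl)
    have "(\<Sum>s\<le>N. (int a * int (s + 1) - 1) * Yv N k s)
        = (\<Sum>s\<le>N. int a * (int s * Yv N k s) + (int a - 1) * Yv N k s)"
      by (intro sum.cong refl) (simp add: algebra_simps)
    also have "\<dots> = int a * (\<Sum>s\<le>N. int s * Yv N k s) + (int a - 1) * (\<Sum>s\<le>N. Yv N k s)"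
      by (simp add: sum.distrib sum_distrib_left)
    also have "\<dots> = int a * Lf N k"
      using sum_Yv[of N k] Lf_Kv[of N "Yv N k"] Kv_Yv[OF k] by simp
    finally show ?thesis using e1 c1 by simp
  qed
  show ?thesis
  proof (rule fps_ext)
    fix c
    have "fps_nth (Psi N a) c = (\<Sum>k\<in>Sc N c. ex N (int a * Lf N k))" by (simp add: Psi_def)
    also have "\<dots> = (\<Sum>k\<in>Sc N c. ex N (Lf N (rho N h k)))"
    proof (intro sum.cong refl)
      fix k assume "k \<in> Sc N c"
      then have "k \<in> lattice N" by (simp add: Sc_def)
      from expo[OF this] show "ex N (int a * Lf N k) = ex N (Lf N (rho N h k))"
        by (intro ex_cong) (simp add: M_def cong_sym)
    qed
    also have "\<dots> = (\<Sum>k\<in>Sc N c. ex N (Lf N k))"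
      by (rule sum.reindex_bij_betw[OF rho_bij[OF hb gb hg gh]])
    also have "\<dots> = fps_nth (Psi N 1) c" by (simp add: Psi_def)
    finally show "fps_nth (Psi N a) c = fps_nth (Psi N 1) c" .
  qed
qed


definition W :: "nat \<Rightarrow> nat \<Rightarrow> complex fps" where
  "W n e = sum (Psi (Suc n)) {j. j < Suc n + 2 \<and> gcd j (Suc n + 2) = e}"

lemma W_rep: "e dvd (Suc n + 2) \<Longrightarrow> rep (Suc n) (W n e)"
proof (induction "Suc n + 2 - e" arbitrary: e rule: less_induct)
  case less
  define M where "M = Suc n + 2"
  have eM: "e dvd M" using less.prems unfolding M_def .
  have e1: "e \<ge> 1" using eM unfolding M_def by (cases e) auto
  define T where "T = {e'. e' dvd M \<and> e dvd e'}"
  define S where "S = {j. j < M \<and> e dvd j}"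
  have fT: "finite T" unfolding T_def M_def
    by (rule finite_subset[of _ "{..Suc n + 2}"]) (auto intro: dvd_imp_le)
  have fS: "finite S" unfolding S_def by simp
  have img: "(\<lambda>j. gcd j M) ` S \<subseteq> T" unfolding S_def T_def using eM by auto
  have grp: "(\<Sum>y\<in>T. sum (Psi (Suc n)) {x. x \<in> S \<and> gcd x M = y}) = sum (Psi (Suc n)) S"
    by (rule sum.group[OF fS fT img])
  have Wy: "sum (Psi (Suc n)) {x. x \<in> S \<and> gcd x M = y} = W n y" if "y \<in> T" for y
  proof -
    have "{x. x \<in> S \<and> gcd x M = y} = {j. j < M \<and> gcd j M = y}"
      using that unfolding S_def T_def by (auto intro: dvd_trans)
    then show ?thesis unfolding W_def M_def by simp
  qed
  have eT: "e \<in> T" unfolding T_def using eM by simp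
  have "sum (Psi (Suc n)) S = W n e + (\<Sum>y\<in>T - {e}. W n y)"
    using grp Wy sum.remove[OF fT eT, of "W n"] by simp
  then have We: "W n e = sum (Psi (Suc n)) S - (\<Sum>y\<in>T - {e}. W n y)" by simp
  have "rep (Suc n) (sum (Psi (Suc n)) S)" unfolding S_def M_def by (rule rep_J[OF less.prems e1])
  moreover have "rep (Suc n) (\<Sum>y\<in>T - {e}. W n y)"
  proof (rule rep_sum)
    show "finite (T - {e})" using fT by simp
    fix y assume y: "y \<in> T - {e}"
    then have yM: "y dvd M" and ey: "e dvd y" and ney: "y \<noteq> e" unfolding T_def by auto
    have y0: "y > 0" using yM unfolding M_def by (cases y) auto
    have "e \<le> y" using ey y0 by (rule dvd_imp_le)
    then have "e < y" using ney by simp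
    moreover have "y \<le> M" using yM unfolding M_def by (rule dvd_imp_le) simp
    ultimately have "Suc n + 2 - y < Suc n + 2 - e" unfolding M_def by simp
    then show "rep (Suc n) (W n y)" using less.hyps yM unfolding M_def by blast
  qed
  ultimately show ?case unfolding We by (rule rep_diff)
qed

lemma theta_n_Psi: "theta_n N = Psi N 1"
  unfolding theta_n_def Psi_def ex_def Sc_def Lf_def by simp

lemma main: "rep (Suc n) (theta_n (Suc n))"
proof -
  define M where "M = Suc n + 2"
  define G where "G = {j. j < M \<and> gcd j M = 1}"
  have "W n 1 = sum (Psi (Suc n)) G" unfolding W_def G_def M_def ..
  also have "\<dots> = sum (\<lambda>_. Psi (Suc n) 1) G"
    by (intro sum.cong refl galois) (auto simp: G_def M_def coprime_iff_gcd_eq_1)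
  also have "\<dots> = of_nat (card G) * Psi (Suc n) 1" by simp
  finally have WG: "W n 1 = of_nat (card G) * Psi (Suc n) 1" .
  have "1 \<in> G" unfolding G_def M_def by simp
  moreover have "finite G" unfolding G_def by simp
  ultimately have cG: "card G \<ge> 1" by (metis One_nat_def Suc_leI card_gt_0_iff empty_iff)
  define cc where "cc = (of_nat (card G) :: complex)"
  have cne: "cc \<noteq> 0" using cG unfolding cc_def by simp
  have "fps_const (of_rat (1 / of_nat (card G))) * W n 1 = fps_const (1 / cc) * (fps_const cc * Psi (Suc n) 1)"
    unfolding WG cc_def by (simp add: of_rat_divide fps_of_nat)
  also have "\<dots> = fps_const (1 / cc * cc) * Psi (Suc n) 1"
    by (subst mult.assoc[symmetric]) (simp only: fps_const_mult)
  also have "\<dots> = Psi (Suc n) 1" using cne by simp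
  finally have "Psi (Suc n) 1 = fps_const (of_rat (1 / of_nat (card G))) * W n 1" by simp
  moreover have "rep (Suc n) (W n 1)" by (rule W_rep) simp
  ultimately show ?thesis unfolding theta_n_Psi by (metis rep_smult)
qed

theorem proposition3p1:
  fixes n :: nat
  assumes "n \<ge> 1"
  shows "\<exists>(N::nat) (a::nat \<Rightarrow> rat) (A::nat \<Rightarrow> nat \<Rightarrow> nat \<Rightarrow> real).
           N \<ge> 1 \<and> (\<forall>i<N. int_posdef_qf n (A i)) \<and>
           theta_n n = (\<Sum>i<N. fps_const (of_rat (a i)) * theta_Q n (A i))"
proof -
  obtain m where n: "n = Suc m" using assms by (cases n) auto
  show ?thesis using main[of m] unfolding n rep_def .
qed

end
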